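(* Let $g\in C^0([0,\infty),H)$ and let $u$ be the weak solution on $[0,\infty)$ of $u''+2\delta u'+Au=g$ with data in $D(A^{1/2})\times H$. Define $$E(t)=|u'(t)|^2+|A^{1/2}u(t)|^2,\qquad \widehat E(t)=E(t)+2\mu\langle u'(t),Qu(t)\rangle,$$ and, for $d\ge0$ and $u(t)\ne0$, $$G_d(t)=\frac{E(t)}{|u(t)|^{2+d}},\qquad \widehat G_d(t)=\frac{\widehat E(t)}{|u(t)|^{2+d}}.$$ Then: (1) $\tfrac12E(t)\le\widehat E(t)\le 2E(t)$ for all $t\ge0$. Moreover, $\widehat E$ is of class $C^1$ on $[0,\infty)$ and $$\widehat E'(t)\le-\frac{\mu}{2}\widehat E(t)+\frac{2}{\delta}|g(t)|^2\quad\text{for all } t\ge0.$$ (2) Suppose $u(t)\ne0$ for all $t$ in an interval $(a,b)$, and let $d\ge0$. Then $\tfrac12G_d(t)\le\widehat G_d(t)\le2G_d(t)$ on $(a,b)$. Moreover, $\widehat G_d$ is of class $C^1$ on $(a,b)$ and $$\widehat G_d'(t)\le-\frac{\mu}{2}\widehat G_d(t)+\frac{2}{\delta}\frac{|g(t)|^2}{|u(t)|^{2+d}}+(2+d)|u(t)|^{d/2}[G_d(t)]^{1/2}\widehat G_d(t)\quad\text{for all } t\in(a,b).$$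
   Context: $H$ is a separable real Hilbert space with norm $|\cdot|$ and scalar product $\langle\cdot,\cdot\rangle$. $A$ is a self-adjoint nonnegative operator with dense domain, and $\delta>0$. Weak solutions of $u''+2\delta u'+Au=g$ lie in $C^0([0,\infty),D(A^{1/2}))\cap C^1([0,\infty),H)$. Their energy $E$ is $C^1$ with $E'=-4\delta|u'|^2+2\langle u',g\rangle$. $Q:H\to H$ denotes the orthogonal projection onto $\ker(A)^\perp$. The constant $\nu>0$ is such that $|Qu|^2\le\nu^{-1}|A^{1/2}u|^2$ for all $u\in D(A^{1/2})$. Under the spectral assumption that $\sigma(A)$ is a discrete set of eigenvalues without finite accumulation points, one can take $\nu$ to be the smallest positive eigenvalue of $A$, or any $\nu>0$ if $A=0$. The constant $\mu$ is $\mu:=\min\{\tfrac12,\tfrac{\nu}{2},\tfrac{\delta}{2},\tfrac{\nu}{5\delta}\}$. *)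

theory Defs
  imports "HOL-Analysis.Analysis"
begin

text \<open>An (unbounded) operator is represented by a domain D and a map A (only meaningful on D).
  Self-adjoint nonnegative operator with dense domain.\<close>
definition selfadj_nonneg :: "'a::{real_inner,complete_space} set \<Rightarrow> ('a \<Rightarrow> 'a) \<Rightarrow> bool" where
  "selfadj_nonneg D A \<longleftrightarrow>
     subspace D \<and> closure D = UNIV \<and>
     (\<forall>x\<in>D. \<forall>y\<in>D. \<forall>c::real. A (x + y) = A x + A y \<and> A (c *\<^sub>R x) = c *\<^sub>R A x) \<and>
     (\<forall>x\<in>D. \<forall>y\<in>D. inner (A x) y = inner x (A y)) \<and>
     (\<forall>x\<in>D. inner (A x) x \<ge> 0) \<and>
     (\<forall>y z. (\<forall>x\<in>D. inner (A x) y = inner x z) \<longrightarrow> y \<in> D \<and> A y = z)"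

definition is_sqrt_op :: "'a::{real_inner,complete_space} set \<Rightarrow> ('a \<Rightarrow> 'a) \<Rightarrow> 'a set \<Rightarrow> ('a \<Rightarrow> 'a) \<Rightarrow> bool" where
  "is_sqrt_op DB B DA A \<longleftrightarrow> selfadj_nonneg DB B \<and> DA = {x \<in> DB. B x \<in> DB} \<and> (\<forall>x\<in>DA. A x = B (B x))"

definition is_orth_proj :: "'a::real_inner set \<Rightarrow> ('a \<Rightarrow> 'a) \<Rightarrow> bool" where
  "is_orth_proj M Q \<longleftrightarrow> (\<forall>x. Q x \<in> M \<and> (\<forall>y\<in>M. inner (x - Q x) y = 0))"

text \<open>Weak solution on [0,\<infinity>) of u'' + 2 delta u' + A u = g, with A = B^2, B = A^(1/2),
  and u' the time derivative of u:  u \<in> C^0([0,\<infinity>),D(A^(1/2))) \<inter> C^1([0,\<infinity>),H),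
  and for every v \<in> D(A^(1/2)):  d/dt <u',v> + 2 delta <u',v> + <B u, B v> = <g,v>.\<close>
definition weak_solution ::
  "'a::{real_inner,complete_space} set \<Rightarrow> ('a \<Rightarrow> 'a) \<Rightarrow> real \<Rightarrow> (real \<Rightarrow> 'a) \<Rightarrow> (real \<Rightarrow> 'a) \<Rightarrow> (real \<Rightarrow> 'a) \<Rightarrow> bool" where
  "weak_solution DB B \<delta> g u u' \<longleftrightarrow>
     (\<forall>t\<ge>0. u t \<in> DB) \<and>
     continuous_on {0..} u \<and> continuous_on {0..} (\<lambda>t. B (u t)) \<and>
     (\<forall>t\<ge>0. (u has_vector_derivative u' t) (at t within {0..})) \<and>
     continuous_on {0..} u' \<and>
     (\<forall>v\<in>DB. \<forall>t\<ge>0.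
        ((\<lambda>s. inner (u' s) v) has_real_derivative
           (inner (g t) v - 2 * \<delta> * inner (u' t) v - inner (B (u t)) (B v))) (at t within {0..}))"

end

theory Submission
  imports Defs
begin


lemma vdq:
  assumes "(w has_vector_derivative w') (at t within S)"
  shows "((\<lambda>y. (w y - w t) /\<^sub>R (y - t)) \<longlongrightarrow> w') (at t within S)"
proof -
  from assms have "((\<lambda>y. norm ((w y - w t) - (y - t) *\<^sub>R w') / norm (y - t)) \<longlongrightarrow> 0) (at t within S)"
    unfolding has_vector_derivative_def has_derivative_iff_norm by simp
  hence "((\<lambda>y. norm ((w y - w t) /\<^sub>R (y - t) - w')) \<longlongrightarrow> 0) (at t within S)"
  proof (rule Lim_transform_eventually)
    show "\<forall>\<^sub>F y in at t within S. norm (w y - w t - (y - t) *\<^sub>R w') / norm (y - t) = norm ((w y - w t) /\<^sub>R (y - t) - w')"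
      unfolding eventually_at_filter
    proof (intro always_eventually allI impI)
      fix y assume "y \<noteq> t"
      have "(1 / (y - t)) *\<^sub>R (w y - w t - (y - t) *\<^sub>R w') = (1 / (y - t)) *\<^sub>R (w y - w t) - ((1 / (y - t)) * (y - t)) *\<^sub>R w'"
        by (simp add: scaleR_diff_right)
      also have "\<dots> = (w y - w t) /\<^sub>R (y - t) - w'" using \<open>y \<noteq> t\<close> by (simp add: divide_inverse)
      finally have "(w y - w t) /\<^sub>R (y - t) - w' = (1 / (y - t)) *\<^sub>R (w y - w t - (y - t) *\<^sub>R w')" by simp
      thus "norm (w y - w t - (y - t) *\<^sub>R w') / norm (y - t) = norm ((w y - w t) /\<^sub>R (y - t) - w')"
        by (simp add: divide_inverse mult.commute)
    qed
  qed
  thus ?thesis by (simp add: tendsto_norm_zero_iff LIM_zero_iff)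
qed

lemma inner_weak_deriv:
  fixes c w :: "real \<Rightarrow> 'a::real_inner"
  assumes w: "(w has_vector_derivative w') (at t within S)"
    and c: "(c \<longlongrightarrow> c t) (at t within S)"
    and D: "((\<lambda>s. inner (c s) (w t)) has_real_derivative D) (at t within S)"
  shows "((\<lambda>s. inner (c s) (w s)) has_real_derivative (D + inner (c t) w')) (at t within S)"
proof -
  have 1: "((\<lambda>y. (inner (c y) (w t) - inner (c t) (w t)) / (y - t)) \<longlongrightarrow> D) (at t within S)"
    using D by (simp add: has_field_derivative_iff)
  have 2: "((\<lambda>y. inner (c y) ((w y - w t) /\<^sub>R (y - t))) \<longlongrightarrow> inner (c t) w') (at t within S)"
    by (rule tendsto_inner[OF c vdq[OF w]])
  have "((\<lambda>y. (inner (c y) (w t) - inner (c t) (w t)) / (y - t) + inner (c y) ((w y - w t) /\<^sub>R (y - t)))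
         \<longlongrightarrow> D + inner (c t) w') (at t within S)"
    by (rule tendsto_add[OF 1 2])
  moreover have "\<And>y. (inner (c y) (w t) - inner (c t) (w t)) / (y - t) + inner (c y) ((w y - w t) /\<^sub>R (y - t))
     = (inner (c y) (w y) - inner (c t) (w t)) / (y - t)"
    by (simp add: inner_diff_right diff_divide_distrib divide_inverse algebra_simps)
  ultimately show ?thesis by (simp add: has_field_derivative_iff)
qed

lemma proj_unique:
  assumes "subspace M" "p \<in> M" "q \<in> M" "\<forall>y\<in>M. inner (x - p) y = 0" "\<forall>y\<in>M. inner (x - q) y = 0"
  shows "p = q"
proof -
  have "p - q \<in> M" using assms by (simp add: subspace_diff)
  hence "inner (x - q) (p - q) - inner (x - p) (p - q) = 0" using assms by simp
  hence "inner (p - q) (p - q) = 0" by (simp add: inner_diff_left)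
  thus ?thesis by simp
qed

lemma alg1:
  fixes \<delta> \<nu> \<mu> X Y W Gn P c e r :: real
  assumes "\<delta>>0" "\<nu>>0" "\<mu>>0" "\<mu> \<le> 1/2" "\<mu> \<le> \<nu>/2" "\<mu> \<le> \<delta>/2" "\<mu> \<le> \<nu>/(5*\<delta>)"
    "X\<ge>0" "Y\<ge>0" "W\<ge>0" "Gn\<ge>0" "P \<le> X\<^sup>2" "c \<le> X*Gn" "e \<le> Gn*W" "\<bar>r\<bar> \<le> X*W" "W\<^sup>2 \<le> Y\<^sup>2/\<nu>"
  shows "-4*\<delta>*X\<^sup>2 + 2*c + 2*\<mu>*(P + e - 2*\<delta>*r - Y\<^sup>2) \<le> -(\<mu>/2)*(X\<^sup>2 + Y\<^sup>2 + 2*\<mu>*r) + (2/\<delta>)*Gn\<^sup>2"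
proof -
  have i: "2*c \<le> \<delta>*X\<^sup>2 + Gn\<^sup>2/\<delta>"
  proof -
    have "0 \<le> (\<delta>*X - Gn)\<^sup>2 / \<delta>" using assms by simp
    also have "(\<delta>*X - Gn)\<^sup>2 / \<delta> = \<delta>*X\<^sup>2 + Gn\<^sup>2/\<delta> - 2*X*Gn" using assms
      by (simp add: power2_eq_square field_simps)
    finally show ?thesis using assms by linarith
  qed
  have mu1: "\<mu>*\<nu> \<le> \<nu>*\<nu>/(5*\<delta>)" using assms mult_right_mono[OF assms(7), of \<nu>] by (simp add: mult.commute)
  have mu2: "\<mu> * \<delta> \<le> \<nu>/5" using assms(7) assms(1) by (simp add: field_simps)
  have ii: "2*\<mu>*e \<le> \<mu>*Y\<^sup>2/2 + Gn\<^sup>2/\<delta>"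
  proof -
    have "0 \<le> (\<nu>/2)*(W - 2*Gn/\<nu>)\<^sup>2" using assms by simp
    also have "(\<nu>/2)*(W - 2*Gn/\<nu>)\<^sup>2 = (\<nu>/2)*W\<^sup>2 + 2*Gn\<^sup>2/\<nu> - 2*W*Gn" using assms
      by (simp add: power2_eq_square field_simps)
    finally have a: "2*W*Gn \<le> (\<nu>/2)*W\<^sup>2 + 2*Gn\<^sup>2/\<nu>" by linarith
    have b: "(\<nu>/2)*W\<^sup>2 \<le> Y\<^sup>2/2" using assms mult_left_mono[OF assms(16), of "\<nu>/2"] by simp
    have c: "2*\<mu>*Gn\<^sup>2/\<nu> \<le> Gn\<^sup>2/\<delta>"
    proof -
      have "2*\<mu>/\<nu> \<le> 1/\<delta>" using mu2 assms by (simp add: field_simps)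
      from mult_right_mono[OF this, of "Gn\<^sup>2"] show ?thesis by simp
    qed
    have "2*\<mu>*e \<le> \<mu>*(2*W*Gn)" using assms mult_left_mono[OF assms(14), of "2*\<mu>"] by (simp add: algebra_simps)
    also have "\<dots> \<le> \<mu>*((\<nu>/2)*W\<^sup>2 + 2*Gn\<^sup>2/\<nu>)" using a assms by simp
    also have "\<dots> \<le> \<mu>*(Y\<^sup>2/2) + 2*\<mu>*Gn\<^sup>2/\<nu>" using b assms mult_left_mono[OF b, of \<mu>] by (simp add: algebra_simps)
    finally show ?thesis using c by simp
  qed
  have iii: "2*\<mu>*P \<le> 2*\<mu>*X\<^sup>2"
  proof -
    show "2*\<mu>*P \<le> 2*\<mu>*X\<^sup>2" using assms by simp
  qed
  define k where "k = (4*\<delta> - \<mu>)*\<mu>"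
  define \<alpha> where "\<alpha> = 3*\<delta> - 5*\<mu>/2"
  have k0: "0 \<le> k" "k \<le> 4*\<delta>*\<mu>" using assms unfolding k_def by auto
  have al: "\<alpha> \<ge> 7*\<delta>/4" using assms unfolding \<alpha>_def by simp
  have kk: "k\<^sup>2 \<le> 4*\<alpha>*(\<mu>*\<nu>)"
  proof -
    have "k\<^sup>2 \<le> (4*\<delta>*\<mu>)\<^sup>2" using k0 by (simp add: power_mono)
    also have "\<dots> = 16*\<delta>*\<mu>*(\<mu>*\<delta>)" by (simp add: power2_eq_square)
    also have "\<dots> \<le> 16*\<delta>*\<mu>*(\<nu>/5)" using mu2 assms by (intro mult_left_mono) auto
    also have "\<dots> \<le> 4*(7*\<delta>/4)*(\<mu>*\<nu>)" using assms by simp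
    also have "\<dots> \<le> 4*\<alpha>*(\<mu>*\<nu>)" using al assms by (intro mult_right_mono) auto
    finally show ?thesis .
  qed
  have iv: "k*\<bar>r\<bar> \<le> \<alpha>*X\<^sup>2 + \<mu>*Y\<^sup>2"
  proof -
    have apos: "\<alpha> > 0" using al assms by simp
    have "0 \<le> \<alpha>*(X - k*W/(2*\<alpha>))\<^sup>2 + (\<mu>*\<nu> - k\<^sup>2/(4*\<alpha>))*W\<^sup>2"
    proof -
      have "k\<^sup>2/(4*\<alpha>) \<le> \<mu>*\<nu>" using kk apos by (simp add: field_simps)
      thus ?thesis using apos by (intro add_nonneg_nonneg) auto
    qed
    also have "\<dots> = \<alpha>*X\<^sup>2 + \<mu>*\<nu>*W\<^sup>2 - k*X*W" using apos by (simp add: power2_eq_square field_simps)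
    finally have "k*X*W \<le> \<alpha>*X\<^sup>2 + \<mu>*\<nu>*W\<^sup>2" by simp
    moreover have "\<mu>*\<nu>*W\<^sup>2 \<le> \<mu>*Y\<^sup>2"
    proof -
      have "\<nu>*W\<^sup>2 \<le> Y\<^sup>2" using assms(16) assms(2) by (simp add: field_simps)
      thus ?thesis using assms mult_left_mono[of "\<nu>*W\<^sup>2" "Y\<^sup>2" \<mu>] by (simp add: mult.assoc)
    qed
    moreover have "k*\<bar>r\<bar> \<le> k*(X*W)" using k0 assms by (intro mult_left_mono) auto
    ultimately show ?thesis by (simp add: mult.assoc)
  qed
  have rr: "k*(-r) \<le> k*\<bar>r\<bar>" using k0 by (intro mult_left_mono) auto
  have L: "-4*\<delta>*X\<^sup>2 + 2*c + 2*\<mu>*(P + e - 2*\<delta>*r - Y\<^sup>2) = -4*\<delta>*X\<^sup>2 + 2*c + 2*\<mu>*P + 2*\<mu>*e + k*(-r) - \<mu>*\<mu>*r - 2*\<mu>*Y\<^sup>2"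
    unfolding k_def by (simp add: algebra_simps)
  have R: "-(\<mu>/2)*(X\<^sup>2 + Y\<^sup>2 + 2*\<mu>*r) + (2/\<delta>)*Gn\<^sup>2 = -(\<mu>/2)*X\<^sup>2 - (\<mu>/2)*Y\<^sup>2 - \<mu>*\<mu>*r + Gn\<^sup>2/\<delta> + Gn\<^sup>2/\<delta>"
    by (simp add: algebra_simps)
  have A: "\<alpha>*X\<^sup>2 = 3*(\<delta>*X\<^sup>2) - (5/2)*(\<mu>*X\<^sup>2)" unfolding \<alpha>_def by (simp add: algebra_simps)
  have ii': "2*\<mu>*e \<le> (1/2)*(\<mu>*Y\<^sup>2) + Gn\<^sup>2/\<delta>" using ii by simp
  show ?thesis unfolding L R using i ii' iii iv rr A by linarith
qed


lemma alg0:
  fixes \<mu> \<nu> X Y W r :: real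
  assumes "\<mu>>0" "\<mu> \<le> 1/2" "\<mu> \<le> \<nu>/2" "\<nu>>0" "X\<ge>0" "W\<ge>0" "\<bar>r\<bar> \<le> X*W" "W\<^sup>2 \<le> Y\<^sup>2/\<nu>"
  shows "\<bar>2*\<mu>*r\<bar> \<le> (X\<^sup>2 + Y\<^sup>2)/2"
proof -
  have a: "2*(X*W) \<le> X\<^sup>2 + W\<^sup>2" using sum_squares_bound[of X W] by (simp add: power2_eq_square)
  have b: "\<mu>*W\<^sup>2 \<le> Y\<^sup>2/2"
  proof -
    have "\<mu>*W\<^sup>2 \<le> \<mu>*(Y\<^sup>2/\<nu>)" using assms by (intro mult_left_mono) auto
    also have "\<dots> = (\<mu>/\<nu>)*Y\<^sup>2" by simp
    also have "\<dots> \<le> (1/2)*Y\<^sup>2"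
    proof (rule mult_right_mono)
      show "\<mu>/\<nu> \<le> 1/2" using assms by (simp add: divide_le_eq)
    qed simp
    finally show ?thesis by simp
  qed
  have c: "\<mu>*X\<^sup>2 \<le> X\<^sup>2/2" using assms mult_right_mono[of \<mu> "1/2" "X\<^sup>2"] by simp
  have "\<bar>2*\<mu>*r\<bar> = \<mu>*(2*\<bar>r\<bar>)" using assms by (simp add: abs_mult)
  also have "\<dots> \<le> \<mu>*(2*(X*W))" using assms by (intro mult_left_mono) auto
  also have "\<dots> \<le> \<mu>*(X\<^sup>2 + W\<^sup>2)" using assms a by (intro mult_left_mono) auto
  finally have "\<bar>2*\<mu>*r\<bar> \<le> \<mu>*(X\<^sup>2 + W\<^sup>2)" .
  moreover have "\<mu>*(X\<^sup>2 + W\<^sup>2) = \<mu>*X\<^sup>2 + \<mu>*W\<^sup>2" by (simp add: distrib_left)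
  moreover have "(X\<^sup>2 + Y\<^sup>2)/2 = X\<^sup>2/2 + Y\<^sup>2/2" by simp
  ultimately show ?thesis using b c by linarith
qed

lemma normpowr: "norm (x::'a::real_inner) powr p = (inner x x) powr (p/2)"
proof (cases "x = 0")
  case True thus ?thesis by simp
next
  case False
  hence pos: "norm x > 0" by simp
  have e1: "inner x x = norm x powr 2" using pos by (simp only: powr_numeral power2_norm_eq_inner)
  have e2: "(norm x powr 2) powr (p/2) = norm x powr (2 * (p/2))" by (simp only: powr_powr)
  show ?thesis unfolding e1 e2 by simp
qed

lemma algD:
  fixes a e K I ip p L :: real
  assumes "K \<noteq> 0" "I \<noteq> 0"
  shows "(a*K - e*(K*(0*L + 2*ip*(p/2)/I)))/(K*K) = a/K - (e/K)*p*ip/I"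
  using assms by (simp add: field_simps)

lemma algE:
  fixes X Y r :: real
  assumes "0 \<le> X" "0 \<le> Y" "r \<le> (X+Y)/2" "-r \<le> (X+Y)/2"
  shows "(X+Y)/2 \<le> X+Y+r \<and> X+Y+r \<le> 2*(X+Y)"
proof
  show "(X+Y)/2 \<le> X+Y+r" using assms by argo
  show "X+Y+r \<le> 2*(X+Y)" using assms by argo
qed


theorem lemma4p2:
  fixes DA DB :: "'a::{real_inner,complete_space} set"
    and A B Q :: "'a \<Rightarrow> 'a"
    and \<delta> \<nu> \<mu> :: real
    and g u u' :: "real \<Rightarrow> 'a"
  assumes separable: "\<exists>C::'a set. countable C \<and> closure C = UNIV"
    and A_sa: "selfadj_nonneg DA A"
    and B_sqrt: "is_sqrt_op DB B DA A"
    and delta_pos: "\<delta> > 0"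
    and Q_proj: "is_orth_proj (orthogonal_comp {x \<in> DA. A x = 0}) Q"
    and nu_pos: "\<nu> > 0"
    and nu_ineq: "\<forall>x\<in>DB. (norm (Q x))\<^sup>2 \<le> (norm (B x))\<^sup>2 / \<nu>"
    and mu_def: "\<mu> = min (min (1/2) (\<nu>/2)) (min (\<delta>/2) (\<nu> / (5*\<delta>)))"
    and g_cont: "continuous_on {0..} g"
    and weak: "weak_solution DB B \<delta> g u u'"
    and energy: "\<forall>t\<ge>0. ((\<lambda>s. (norm (u' s))\<^sup>2 + (norm (B (u s)))\<^sup>2) has_real_derivative
                  (-4 * \<delta> * (norm (u' t))\<^sup>2 + 2 * inner (u' t) (g t))) (at t within {0..})"
  defines "E \<equiv> \<lambda>t. (norm (u' t))\<^sup>2 + (norm (B (u t)))\<^sup>2"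
    and "Eh \<equiv> \<lambda>t. (norm (u' t))\<^sup>2 + (norm (B (u t)))\<^sup>2 + 2 * \<mu> * inner (u' t) (Q (u t))"
  shows
    "(\<forall>t\<ge>0. E t / 2 \<le> Eh t \<and> Eh t \<le> 2 * E t) \<and>
     (\<exists>Eh'. continuous_on {0..} Eh' \<and>
        (\<forall>t\<ge>0. (Eh has_real_derivative Eh' t) (at t within {0..}) \<and>
                Eh' t \<le> - (\<mu>/2) * Eh t + (2/\<delta>) * (norm (g t))\<^sup>2)) \<and>
     (\<forall>a b d. 0 \<le> a \<longrightarrow> d \<ge> 0 \<longrightarrow> (\<forall>t\<in>{a<..<b}. u t \<noteq> 0) \<longrightarrow>
        (let G = (\<lambda>t. E t / norm (u t) powr (2 + d));
             Gh = (\<lambda>t. Eh t / norm (u t) powr (2 + d))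
         in (\<forall>t\<in>{a<..<b}. G t / 2 \<le> Gh t \<and> Gh t \<le> 2 * G t) \<and>
            (\<exists>Gh'. continuous_on {a<..<b} Gh' \<and>
               (\<forall>t\<in>{a<..<b}. (Gh has_real_derivative Gh' t) (at t) \<and>
                  Gh' t \<le> - (\<mu>/2) * Gh t + (2/\<delta>) * (norm (g t))\<^sup>2 / norm (u t) powr (2 + d)
                          + (2 + d) * norm (u t) powr (d/2) * sqrt (G t) * Gh t))))"
proof -
  have Bsa: "selfadj_nonneg DB B" using B_sqrt unfolding is_sqrt_op_def by (rule conjunct1)
  have DAeq: "DA = {x \<in> DB. B x \<in> DB}" using B_sqrt unfolding is_sqrt_op_def by (rule conjunct2[THEN conjunct1])
  have AB: "\<forall>x\<in>DA. A x = B (B x)" using B_sqrt unfolding is_sqrt_op_def by (rule conjunct2[THEN conjunct2])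
  note Bd = Bsa[unfolded selfadj_nonneg_def]
  note Ad = A_sa[unfolded selfadj_nonneg_def]
  have DBsub: "subspace DB" by (rule Bd[THEN conjunct1])
  note B3 = Bd[THEN conjunct2, THEN conjunct2, THEN conjunct1]
  have Badd: "\<And>x y. x\<in>DB \<Longrightarrow> y\<in>DB \<Longrightarrow> B (x + y) = B x + B y"
    using B3 by blast
  have Bscale: "\<And>x c. x\<in>DB \<Longrightarrow> B (c *\<^sub>R x) = c *\<^sub>R B x"
    using B3 by blast
  note B4 = Bd[THEN conjunct2, THEN conjunct2, THEN conjunct2, THEN conjunct1]
  have Bsym: "\<And>x y. x\<in>DB \<Longrightarrow> y\<in>DB \<Longrightarrow> inner (B x) y = inner x (B y)"
    using B4 by blast
  note A4 = Ad[THEN conjunct2, THEN conjunct2, THEN conjunct2, THEN conjunct1]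
  have Asym: "\<And>x y. x\<in>DA \<Longrightarrow> y\<in>DA \<Longrightarrow> inner (A x) y = inner x (A y)"
    using A4 by blast
  note A6 = Ad[THEN conjunct2, THEN conjunct2, THEN conjunct2, THEN conjunct2, THEN conjunct2]
  have Aclose: "\<And>y z. (\<forall>x\<in>DA. inner (A x) y = inner x z) \<Longrightarrow> y \<in> DA \<and> A y = z"
    using A6 by blast
  define M where "M = orthogonal_comp {x \<in> DA. A x = 0}"
  have Msub: "subspace M" by (simp add: M_def subspace_orthogonal_comp)
  have QM: "\<And>x. Q x \<in> M" using Q_proj by (simp add: is_orth_proj_def M_def)
  have Qorth: "\<And>x y. y \<in> M \<Longrightarrow> inner (x - Q x) y = 0" using Q_proj by (simp add: is_orth_proj_def M_def)
  have Qadd: "Q (x + y) = Q x + Q y" for x y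
  proof (rule proj_unique[OF Msub QM _ _ ])
    show "Q x + Q y \<in> M" using Msub QM by (simp add: subspace_add)
    show "\<forall>z\<in>M. inner (x + y - Q (x + y)) z = 0" using Qorth by blast
    have eq: "x + y - (Q x + Q y) = (x - Q x) + (y - Q y)" by (simp add: algebra_simps)
    show "\<forall>z\<in>M. inner (x + y - (Q x + Q y)) z = 0" unfolding eq using Qorth by (simp add: inner_add_left)
  qed
  have Qscale: "Q (c *\<^sub>R x) = c *\<^sub>R Q x" for c x
  proof (rule proj_unique[OF Msub QM _ _ ])
    show "c *\<^sub>R Q x \<in> M" using Msub QM by (simp add: subspace_scale)
    show "\<forall>z\<in>M. inner (c *\<^sub>R x - Q (c *\<^sub>R x)) z = 0" using Qorth by blast
    have eq: "c *\<^sub>R x - c *\<^sub>R Q x = c *\<^sub>R (x - Q x)" by (simp add: algebra_simps)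
    show "\<forall>z\<in>M. inner (c *\<^sub>R x - c *\<^sub>R Q x) z = 0" unfolding eq using Qorth by simp
  qed
  have Qnorm: "norm (Q x) \<le> norm x" for x
  proof -
    have h: "inner (x - Q x) (Q x) = 0" using Qorth QM by blast
    hence "orthogonal (Q x) (x - Q x)" unfolding orthogonal_def by (simp only: inner_commute)
    from norm_add_Pythagorean[OF this] have "(norm x)\<^sup>2 = (norm (Q x))\<^sup>2 + (norm (x - Q x))\<^sup>2" by simp
    hence "(norm (Q x))\<^sup>2 \<le> (norm x)\<^sup>2" by simp
    thus ?thesis by (rule power2_le_imp_le[OF _ norm_ge_zero])
  qed
  have blQ: "bounded_linear Q"
  proof (rule bounded_linear_intro[where K=1])
    show "\<And>x y. Q (x + y) = Q x + Q y" by (rule Qadd)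
    show "\<And>r x. Q (r *\<^sub>R x) = r *\<^sub>R Q x" by (rule Qscale)
    show "\<And>x. norm (Q x) \<le> norm x * 1" using Qnorm by simp
  qed
  have kerQ: "Q x \<in> DB \<and> B (Q x) = B x" if xDB: "x \<in> DB" for x
  proof -
    define z where "z = x - Q x"
    have AyM: "A y \<in> M" if yDA: "y \<in> DA" for y
      unfolding M_def orthogonal_comp_def orthogonal_def
    proof (intro CollectI ballI)
      fix k assume "k \<in> {x \<in> DA. A x = 0}"
      hence k: "k \<in> DA" "A k = 0" by auto
      have "inner k (A y) = inner (A y) k" by (rule inner_commute)
      also have "\<dots> = inner y (A k)" by (rule Asym[OF yDA k(1)])
      finally show "inner k (A y) = 0" using k(2) by simp
    qed
    have "\<forall>y\<in>DA. inner (A y) z = inner y 0"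
    proof
      fix y assume "y \<in> DA"
      have "inner (A y) z = inner z (A y)" by (rule inner_commute)
      also have "\<dots> = 0" unfolding z_def by (rule Qorth[OF AyM[OF \<open>y \<in> DA\<close>]])
      finally show "inner (A y) z = inner y 0" by simp
    qed
    hence zA: "z \<in> DA \<and> A z = 0" by (rule Aclose)
    hence zB: "z \<in> DB" "B z \<in> DB" "B (B z) = 0" using DAeq AB by auto
    have "inner (B z) (B z) = inner (B (B z)) z" using Bsym[OF zB(2) zB(1)] by simp
    hence Bz: "B z = 0" using zB(3) by simp
    have Qx: "Q x = x + (-1) *\<^sub>R z" by (simp add: z_def)
    have "(-1) *\<^sub>R z \<in> DB" using zB(1) DBsub by (simp add: subspace_neg)
    hence "Q x \<in> DB" unfolding Qx using xDB DBsub zB(1) by (simp add: subspace_diff)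
    moreover have "B (Q x) = B x" unfolding Qx using Badd[OF xDB \<open>(-1) *\<^sub>R z \<in> DB\<close>] Bscale[OF zB(1), where c="-1"] Bz by simp
    ultimately show ?thesis by simp
  qed
  from weak have uDB: "\<And>t. t\<ge>0 \<Longrightarrow> u t \<in> DB" and ucont: "continuous_on {0..} u"
    and Bucont: "continuous_on {0..} (\<lambda>t. B (u t))"
    and uder: "\<And>t. t\<ge>0 \<Longrightarrow> (u has_vector_derivative u' t) (at t within {0..})"
    and u'cont: "continuous_on {0..} u'"
    and wk: "\<And>v t. v\<in>DB \<Longrightarrow> t\<ge>0 \<Longrightarrow> ((\<lambda>s. inner (u' s) v) has_real_derivative
           (inner (g t) v - 2 * \<delta> * inner (u' t) v - inner (B (u t)) (B v))) (at t within {0..})"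
    unfolding weak_solution_def by auto
  have mu0: "\<mu> > 0" using mu_def nu_pos delta_pos by simp
  have mu1: "\<mu> \<le> 1/2" "\<mu> \<le> \<nu>/2" "\<mu> \<le> \<delta>/2" "\<mu> \<le> \<nu>/(5*\<delta>)" using mu_def by auto
  define Eh' where "Eh' = (\<lambda>t. -4*\<delta>*(norm (u' t))\<^sup>2 + 2*inner (u' t) (g t) + 2*\<mu>*(inner (u' t) (Q (u' t))
      + inner (g t) (Q (u t)) - 2*\<delta>*inner (u' t) (Q (u t)) - (norm (B (u t)))\<^sup>2))"
  have EhE: "E t / 2 \<le> Eh t \<and> Eh t \<le> 2 * E t" if "t \<ge> 0" for t
  proof -
    have "\<bar>2*\<mu>*inner (u' t) (Q (u t))\<bar> \<le> ((norm (u' t))\<^sup>2 + (norm (B (u t)))\<^sup>2)/2"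
      by (rule alg0[OF mu0 mu1(1,2) nu_pos norm_ge_zero norm_ge_zero Cauchy_Schwarz_ineq2 nu_ineq[rule_format, OF uDB[OF that]]])
    hence h: "2*\<mu>*inner (u' t) (Q (u t)) \<le> ((norm (u' t))\<^sup>2 + (norm (B (u t)))\<^sup>2)/2"
      "- (2*\<mu>*inner (u' t) (Q (u t))) \<le> ((norm (u' t))\<^sup>2 + (norm (B (u t)))\<^sup>2)/2"
      by (simp_all only: abs_le_iff)
    have "0 \<le> (norm (u' t))\<^sup>2" "0 \<le> (norm (B (u t)))\<^sup>2" by simp_all
    thus ?thesis unfolding E_def Eh_def using h by (intro algE)
  qed
  have Ehder: "(Eh has_real_derivative Eh' t) (at t within {0..})" if t0: "t \<ge> 0" for t
  proof -
    have d1: "((\<lambda>s. inner (u' s) (Q (u t))) has_real_derivative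
           (inner (g t) (Q (u t)) - 2 * \<delta> * inner (u' t) (Q (u t)) - (norm (B (u t)))\<^sup>2)) (at t within {0..})"
      using wk[OF conjunct1[OF kerQ[OF uDB[OF t0]]] t0] kerQ[OF uDB[OF t0]] by (simp add: power2_norm_eq_inner)
    have dQ: "((\<lambda>s. Q (u s)) has_vector_derivative Q (u' t)) (at t within {0..})"
      by (rule bounded_linear.has_vector_derivative[OF blQ uder[OF t0]])
    have cu': "(u' \<longlongrightarrow> u' t) (at t within {0..})" using u'cont t0 by (simp add: continuous_on_def)
    note d2 = inner_weak_deriv[OF dQ cu' d1]
    have "((\<lambda>s. (norm (u' s))\<^sup>2 + (norm (B (u s)))\<^sup>2 + 2 * \<mu> * inner (u' s) (Q (u s))) has_real_derivative
          (-4 * \<delta> * (norm (u' t))\<^sup>2 + 2 * inner (u' t) (g t)) + 2 * \<mu> * (inner (g t) (Q (u t)) - 2 * \<delta> * inner (u' t) (Q (u t)) - (norm (B (u t)))\<^sup>2 + inner (u' t) (Q (u' t)))) (at t within {0..})"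
      by (rule DERIV_add[OF energy[rule_format, OF t0] DERIV_cmult[OF d2]])
    thus ?thesis unfolding Eh_def Eh'_def by (rule DERIV_cong) (simp add: algebra_simps)
  qed
  have Ehineq: "Eh' t \<le> - (\<mu>/2) * Eh t + (2/\<delta>) * (norm (g t))\<^sup>2" if t0: "t \<ge> 0" for t
  proof -
    have P: "inner (u' t) (Q (u' t)) \<le> (norm (u' t))\<^sup>2"
    proof -
      have "inner (u' t) (Q (u' t)) \<le> norm (u' t) * norm (Q (u' t))" by (rule norm_cauchy_schwarz)
      also have "\<dots> \<le> norm (u' t) * norm (u' t)" by (intro mult_left_mono Qnorm) auto
      finally show ?thesis by (simp add: power2_eq_square)
    qed
    have "-4*\<delta>*(norm (u' t))\<^sup>2 + 2*inner (u' t) (g t) + 2*\<mu>*(inner (u' t) (Q (u' t))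
      + inner (g t) (Q (u t)) - 2*\<delta>*inner (u' t) (Q (u t)) - (norm (B (u t)))\<^sup>2)
      \<le> -(\<mu>/2)*((norm (u' t))\<^sup>2 + (norm (B (u t)))\<^sup>2 + 2*\<mu>*inner (u' t) (Q (u t))) + (2/\<delta>)*(norm (g t))\<^sup>2"
      by (rule alg1[OF delta_pos nu_pos mu0 mu1 norm_ge_zero norm_ge_zero norm_ge_zero norm_ge_zero P
            norm_cauchy_schwarz norm_cauchy_schwarz Cauchy_Schwarz_ineq2 nu_ineq[rule_format, OF uDB[OF t0]]])
    thus ?thesis unfolding Eh'_def Eh_def by simp
  qed
  have contQu: "continuous_on {0..} (\<lambda>t. Q (u t))" by (rule bounded_linear.continuous_on[OF blQ ucont])
  have contQu': "continuous_on {0..} (\<lambda>t. Q (u' t))" by (rule bounded_linear.continuous_on[OF blQ u'cont])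
  have Eh'cont: "continuous_on {0..} Eh'" unfolding Eh'_def
    by (intro continuous_on_add continuous_on_diff continuous_on_mult continuous_on_const continuous_on_power
        continuous_on_norm continuous_on_inner u'cont g_cont contQu contQu' Bucont)
  have Ehcont: "continuous_on {0..} Eh" unfolding Eh_def
    by (intro continuous_on_add continuous_on_diff continuous_on_mult continuous_on_const continuous_on_power
        continuous_on_norm continuous_on_inner u'cont contQu Bucont)
  have part1: "\<forall>t\<ge>0. E t / 2 \<le> Eh t \<and> Eh t \<le> 2 * E t" using EhE by blast
  have part2: "\<exists>Eh'. continuous_on {0..} Eh' \<and>
        (\<forall>t\<ge>0. (Eh has_real_derivative Eh' t) (at t within {0..}) \<and>
                Eh' t \<le> - (\<mu>/2) * Eh t + (2/\<delta>) * (norm (g t))\<^sup>2)"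
    using Eh'cont Ehder Ehineq by blast
  have part3: "(\<forall>t\<in>{a<..<b}. E t / norm (u t) powr (2 + d) / 2 \<le> Eh t / norm (u t) powr (2 + d) \<and>
              Eh t / norm (u t) powr (2 + d) \<le> 2 * (E t / norm (u t) powr (2 + d))) \<and>
            (\<exists>Gh'. continuous_on {a<..<b} Gh' \<and>
               (\<forall>t\<in>{a<..<b}. ((\<lambda>t. Eh t / norm (u t) powr (2 + d)) has_real_derivative Gh' t) (at t) \<and>
                  Gh' t \<le> - (\<mu>/2) * (Eh t / norm (u t) powr (2 + d)) + (2/\<delta>) * (norm (g t))\<^sup>2 / norm (u t) powr (2 + d)
                          + (2 + d) * norm (u t) powr (d/2) * sqrt (E t / norm (u t) powr (2 + d)) * (Eh t / norm (u t) powr (2 + d))))"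
    if a0: "0 \<le> a" and d0: "d \<ge> 0" and nz: "\<forall>t\<in>{a<..<b}. u t \<noteq> 0" for a b d
  proof -
    define p where "p = 2 + d"
    have p0: "p > 0" using d0 by (simp add: p_def)
    have Npos: "norm (u t) > 0" if "t \<in> {a<..<b}" for t using nz that by simp
    have Kpos: "norm (u t) powr p > 0" if "t \<in> {a<..<b}" for t using Npos[OF that] by simp
    have tpos: "t \<ge> 0" if "t \<in> {a<..<b}" for t using that a0 by simp
    have atw: "at t within {0..} = at t" if "t \<in> {a<..<b}" for t
      using that a0 by (intro at_within_interior) auto
    have b1: "\<forall>t\<in>{a<..<b}. E t / norm (u t) powr p / 2 \<le> Eh t / norm (u t) powr p \<and>
              Eh t / norm (u t) powr p \<le> 2 * (E t / norm (u t) powr p)"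
    proof
      fix t assume t: "t \<in> {a<..<b}"
      have h1: "E t / 2 \<le> Eh t" and h2: "Eh t \<le> 2 * E t" using EhE[OF tpos[OF t]] by auto
      have K0: "0 \<le> norm (u t) powr p" by simp
      have "E t / 2 / norm (u t) powr p \<le> Eh t / norm (u t) powr p" by (rule divide_right_mono[OF h1 K0])
      moreover have "Eh t / norm (u t) powr p \<le> (2 * E t) / norm (u t) powr p" by (rule divide_right_mono[OF h2 K0])
      ultimately show "E t / norm (u t) powr p / 2 \<le> Eh t / norm (u t) powr p \<and>
              Eh t / norm (u t) powr p \<le> 2 * (E t / norm (u t) powr p)" by simp
    qed
    define Gh' where "Gh' = (\<lambda>t. Eh' t / norm (u t) powr p - (Eh t / norm (u t) powr p) * p * inner (u t) (u' t) / inner (u t) (u t))"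
    have Ghcont: "continuous_on {a<..<b} Gh'"
    proof -
      have sub: "{a<..<b} \<subseteq> {0..}" using a0 by auto
      have c1: "continuous_on {a<..<b} u" "continuous_on {a<..<b} u'" "continuous_on {a<..<b} Eh" "continuous_on {a<..<b} Eh'"
        using continuous_on_subset[OF ucont sub] continuous_on_subset[OF u'cont sub]
          continuous_on_subset[OF Ehcont sub] continuous_on_subset[OF Eh'cont sub] by auto
      have nz1: "\<forall>t\<in>{a<..<b}. norm (u t) \<noteq> 0" "\<forall>t\<in>{a<..<b}. norm (u t) powr p \<noteq> 0"
        "\<forall>t\<in>{a<..<b}. inner (u t) (u t) \<noteq> 0" using Npos Kpos by auto
      have cK: "continuous_on {a<..<b} (\<lambda>t. norm (u t) powr p)"
        by (rule continuous_on_powr[OF continuous_on_norm[OF c1(1)] continuous_on_const nz1(1)])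
      show ?thesis unfolding Gh'_def
        by (intro continuous_on_diff continuous_on_divide continuous_on_mult continuous_on_const
           continuous_on_inner c1 cK nz1)
    qed
    have Ghder: "((\<lambda>t. Eh t / norm (u t) powr p) has_real_derivative Gh' t) (at t)" if t: "t \<in> {a<..<b}" for t
    proof -
      have du: "(u has_derivative (\<lambda>h. h *\<^sub>R u' t)) (at t)"
        using uder[OF tpos[OF t]] atw[OF t] by (simp add: has_vector_derivative_def)
      have dI: "((\<lambda>s. inner (u s) (u s)) has_real_derivative 2 * inner (u t) (u' t)) (at t)"
        unfolding has_field_derivative_def
        by (rule has_derivative_eq_rhs[OF has_derivative_inner[OF du du]])
           (auto simp: fun_eq_iff inner_commute algebra_simps)
      have Ipos: "inner (u t) (u t) > 0" using nz t by simp
      have dK: "((\<lambda>s. inner (u s) (u s) powr (p/2)) has_real_derivative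
          inner (u t) (u t) powr (p/2) * (0 * ln (inner (u t) (u t)) + 2 * inner (u t) (u' t) * (p/2) / inner (u t) (u t))) (at t)"
        by (rule DERIV_powr[OF dI Ipos DERIV_const])
      have dE: "(Eh has_real_derivative Eh' t) (at t)" using Ehder[OF tpos[OF t]] atw[OF t] by simp
      have Kne: "inner (u t) (u t) powr (p/2) \<noteq> 0" using Ipos by simp
      note dG = DERIV_divide[OF dE dK Kne]
      have K: "inner (u t) (u t) powr (p/2) = norm (u t) powr p" by (simp add: normpowr)
      have I: "inner (u t) (u t) = (norm (u t))\<^sup>2" by (simp add: power2_norm_eq_inner)
      have "((\<lambda>s. Eh s / inner (u s) (u s) powr (p/2)) has_real_derivative Gh' t) (at t)"
        using dG
      proof (rule DERIV_cong)
        show "(Eh' t * inner (u t) (u t) powr (p / 2) - Eh t * (inner (u t) (u t) powr (p / 2) * (0 * ln (inner (u t) (u t)) + 2 * inner (u t) (u' t) * (p / 2) / inner (u t) (u t)))) /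
          (inner (u t) (u t) powr (p / 2) * inner (u t) (u t) powr (p / 2)) = Gh' t"
          unfolding Gh'_def K by (rule algD) (use Ipos Kpos[OF t] in auto)
      qed
      thus ?thesis by (simp add: normpowr)
    qed
    have Ghineq: "Gh' t \<le> - (\<mu>/2) * (Eh t / norm (u t) powr p) + (2/\<delta>) * (norm (g t))\<^sup>2 / norm (u t) powr p
                          + p * norm (u t) powr (d/2) * sqrt (E t / norm (u t) powr p) * (Eh t / norm (u t) powr p)"
      if t: "t \<in> {a<..<b}" for t
    proof -
      define N where "N = norm (u t)"
      define K where "K = N powr p"
      define Gh where "Gh = Eh t / K"
      have N0: "N > 0" using Npos[OF t] by (simp add: N_def)
      have K0: "K > 0" using Kpos[OF t] by (simp add: K_def N_def)
      have E0: "E t \<ge> 0" unfolding E_def by simp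
      have "Eh t \<ge> 0" using EhE[OF tpos[OF t]] E0 by linarith
      hence Gh0: "Gh \<ge> 0" unfolding Gh_def using K0 by simp
      have t1: "Eh' t / K \<le> - (\<mu>/2) * Gh + (2/\<delta>) * (norm (g t))\<^sup>2 / K"
      proof -
        have "Eh' t / K \<le> (- (\<mu>/2) * Eh t + (2/\<delta>) * (norm (g t))\<^sup>2) / K"
          using Ehineq[OF tpos[OF t]] K0 by (intro divide_right_mono) auto
        moreover have "(- (\<mu>/2) * Eh t + (2/\<delta>) * (norm (g t))\<^sup>2) / K = - (\<mu>/2) * (Eh t / K) + (2/\<delta>) * (norm (g t))\<^sup>2 / K"
          using K0 by (simp add: field_simps)
        ultimately show ?thesis unfolding Gh_def by linarith
      qed
      have X: "norm (u' t) \<le> sqrt (E t)" unfolding E_def by (rule real_le_rsqrt) simp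
      have S: "N powr (d/2) * sqrt (E t / K) = sqrt (E t) / N"
      proof -
        have "sqrt K = N powr (p/2)" unfolding K_def using N0 by (simp add: powr_half_sqrt_powr)
        also have "\<dots> = N * N powr (d/2)" unfolding p_def using N0 by (simp add: add_divide_distrib powr_add)
        finally have sK: "sqrt K = N * N powr (d/2)" .
        have "sqrt (E t / K) = sqrt (E t) / (N * N powr (d/2))" by (simp add: real_sqrt_divide sK)
        hence "N powr (d/2) * sqrt (E t / K) = N powr (d/2) * sqrt (E t) / (N * N powr (d/2))" by simp
        also have "\<dots> = sqrt (E t) / N" using N0 by simp
        finally show ?thesis .
      qed
      have ip: "- inner (u t) (u' t) \<le> N * norm (u' t)" unfolding N_def
        using Cauchy_Schwarz_ineq2[of "u t" "u' t"] by linarith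
      have t2: "- (Gh * p * inner (u t) (u' t) / N\<^sup>2) \<le> p * (N powr (d/2) * sqrt (E t / K)) * Gh"
      proof -
        have "- (Gh * p * inner (u t) (u' t) / N\<^sup>2) = (Gh * p) * (- inner (u t) (u' t)) / N\<^sup>2" by simp
        also have "\<dots> \<le> (Gh * p) * (N * norm (u' t)) / N\<^sup>2"
          using Gh0 p0 ip N0 by (intro divide_right_mono mult_left_mono) auto
        also have "\<dots> = (Gh * p) * norm (u' t) / N" using N0 by (simp add: power2_eq_square)
        also have "\<dots> \<le> (Gh * p) * sqrt (E t) / N"
          using Gh0 p0 X N0 by (intro divide_right_mono mult_left_mono) auto
        also have "\<dots> = p * (sqrt (E t) / N) * Gh" by simp
        finally show ?thesis unfolding S .
      qed
      have eq: "Gh' t = Eh' t / K - Gh * p * inner (u t) (u' t) / N\<^sup>2"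
        unfolding Gh'_def Gh_def K_def N_def by (simp add: power2_norm_eq_inner)
      have "Gh' t \<le> -(\<mu>/2)*Gh + (2/\<delta>)*(norm (g t))\<^sup>2/K + p*(N powr (d/2)* sqrt (E t/K))*Gh"
        using eq t1 t2 by linarith
      thus ?thesis unfolding Gh_def K_def N_def by (simp add: mult.assoc)
    qed
    show ?thesis using b1 Ghcont Ghder Ghineq unfolding p_def by blast
  qed
  show ?thesis unfolding Let_def using part1 part2 part3 by blast
qed

end
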